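(* Let $p>6$ and assume $h$ satisfies $(h_1)$. For every $u\in\mathcal{M}_{s,2}$ and every $(r,t)\in(0,\infty)\times(0,\infty)$ with $(r,t)\neq(1,1)$, we have $J_{s,2}(u)>J_{s,2}(ru^++tu^-)$.
   Context: Let $d\ge 1$ and $s\in(0,1)$. $\mathbb{Z}^d$ is the integer lattice graph (vertices $\mathbb{Z}^d$, edges between $x,y$ with $\sum_i|x_i-y_i|=1$), with graph distance $|x-y|=\sum_{i=1}^d|x_i-y_i|$ and counting measure $\mu$; $\int_{\mathbb{Z}^d}f\,d\mu:=\sum_{x\in\mathbb{Z}^d}f(x)$. The weight $w_s(x,y)$, defined for $x\neq y$, is symmetric, positive, and satisfies $c_{s,d}|x-y|^{-d-2s}\le w_s(x,y)\le C_{s,d}|x-y|^{-d-2s}$ for some constants $0<c_{s,d}\le C_{s,d}$. For $u,v:\mathbb{Z}^d\to\mathbb{R}$ set $\nabla^s u\nabla^s v(x)=\frac12\sum_{y\neq x}w_s(x,y)(u(x)-u(y))(v(x)-v(y))$, $|\nabla^s u|^2(x)=\nabla^s u\nabla^s u(x)$, $\|\nabla^s u\|_2^2:=\int_{\mathbb{Z}^d}|\nabla^s u|^2d\mu$, and $(-\Delta)^s u(x)=\sum_{y\neq x}w_s(x,y)(u(x)-u(y))$; $\|u\|_q$ denotes the $\ell^q(\mathbb{Z}^d)$ norm. Fix constants $a,b>0$ and $p>2$. The potential $h:\mathbb{Z}^d\to\mathbb{R}$ may satisfy: $(h_1)$ there is $h_0>0$ with $h(x)\ge h_0$ for all $x$;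 $(h_2)$ there is $x_0\in\mathbb{Z}^d$ with $h(x)\to\infty$ as $|x-x_0|\to\infty$. $W^{s,2}(\mathbb{Z}^d)$ is the completion of finitely supported functions under $\|u\|_{W^{s,2}}^2=\int(|\nabla^s u|^2+u^2)d\mu$, and $H^{s,2}=\{u\in W^{s,2}:\int h u^2d\mu<\infty\}$ is the Hilbert space with inner product $\langle u,v\rangle_{H^{s,2}}=\int(a\nabla^s u\nabla^s v+huv)d\mu$ and norm $\|u\|_{H^{s,2}}$. Equation (E) is $\left(a+b\int_{\mathbb{Z}^d}|\nabla^s u|^2d\mu\right)(-\Delta)^s u+h(x)u=|u|^{p-2}u\log u^2$ on $\mathbb{Z}^d$ (with $|t|^{p-2}t\log t^2:=0$ at $t=0$). The energy is $J_{s,2}(u)=\frac12\|u\|_{H^{s,2}}^2+\frac b4\|\nabla^s u\|_2^4+\frac{2}{p^2}\int|u|^pd\mu-\frac1p\int|u|^p\log u^2d\mu$, a $C^1$ functional on $H^{s,2}$ with $\langle J_{s,2}'(u),\phi\rangle=\int(a\nabla^s u\nabla^s\phi+hu\phi)d\mu+b\|\nabla^s u\|_2^2\int\nabla^s u\nabla^s\phi\,d\mu-\int|u|^{p-2}u\phi\log u^2d\mu$. A weak solution is a critical point of $J_{s,2}$; nontrivial means $\neq0$. $u^+=\max\{u,0\}$, $u^-=\min\{u,0\}$. Nehari manifold: $\mathcal{N}_{s,2}=\{v\in H^{s,2}\setminus\{0\}:\langle J_{s,2}'(v),v\rangle=0\}$. Sign-changing Nehari set: $\mathcal{M}_{s,2}=\{v\in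 H^{s,2}: v^\pm\neq0,\ \langle J_{s,2}'(v),v^+\rangle=\langle J_{s,2}'(v),v^-\rangle=0\}$. A ground state solution is a nontrivial weak solution $u$ with $J_{s,2}(u)=\inf_{\mathcal{N}_{s,2}}J_{s,2}$; a sign-changing solution is a weak solution $u$ with $u^\pm\not\equiv0$; a ground state sign-changing solution is a sign-changing solution $u$ with $J_{s,2}(u)=\inf_{\mathcal{M}_{s,2}}J_{s,2}$. For $u\in H^{s,2}$, $K(u)=\sum_{x}\sum_{y\neq x}w_s(x,y)[u^+(y)u^-(x)+u^-(y)u^+(x)]$. *)

theory Defs
  imports "HOL-Analysis.Analysis"
begin

text \<open>The lattice Z^d is rendered as the type int ^ 'd, with d = CARD('d).
  Integrals against counting measure are infinite sums (infsum).\<close>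

type_synonym 'd lattice = "int ^ 'd"

definition ldist :: "'d::finite lattice \<Rightarrow> 'd lattice \<Rightarrow> real" where
  "ldist x y = (\<Sum>i\<in>UNIV. real_of_int \<bar>x $ i - y $ i\<bar>)"

definition frac_weight :: "real \<Rightarrow> ('d::finite lattice \<Rightarrow> 'd lattice \<Rightarrow> real) \<Rightarrow> bool" where
  "frac_weight s w \<longleftrightarrow>
     (\<forall>x y. x \<noteq> y \<longrightarrow> w x y = w y x \<and> w x y > 0) \<and>
     (\<exists>c C. 0 < c \<and> c \<le> C \<and>
        (\<forall>x y. x \<noteq> y \<longrightarrow>
           c * ldist x y powr (- real CARD('d) - 2 * s) \<le> w x y \<and>
           w x y \<le> C * ldist x y powr (- real CARD('d) - 2 * s)))"

definition grad_prod :: "('d::finite lattice \<Rightarrow> 'd lattice \<Rightarrow> real) \<Rightarrow>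
    ('d lattice \<Rightarrow> real) \<Rightarrow> ('d lattice \<Rightarrow> real) \<Rightarrow> 'd lattice \<Rightarrow> real" where
  "grad_prod w u v x = 1/2 * (\<Sum>\<^sub>\<infinity>y\<in>UNIV - {x}. w x y * (u x - u y) * (v x - v y))"

definition grad_norm2 :: "('d::finite lattice \<Rightarrow> 'd lattice \<Rightarrow> real) \<Rightarrow> ('d lattice \<Rightarrow> real) \<Rightarrow> real" where
  "grad_norm2 w u = (\<Sum>\<^sub>\<infinity>x\<in>UNIV. grad_prod w u u x)"

definition W_dens :: "('d::finite lattice \<Rightarrow> 'd lattice \<Rightarrow> real) \<Rightarrow> ('d lattice \<Rightarrow> real) \<Rightarrow> 'd lattice \<Rightarrow> real" where
  "W_dens w u x = grad_prod w u u x + (u x)\<^sup>2"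

definition W_norm2 :: "('d::finite lattice \<Rightarrow> 'd lattice \<Rightarrow> real) \<Rightarrow> ('d lattice \<Rightarrow> real) \<Rightarrow> real" where
  "W_norm2 w u = (\<Sum>\<^sub>\<infinity>x\<in>UNIV. W_dens w u x)"

text \<open>W^{s,2}: completion of finitely supported functions under the W norm,
  realised as the functions that are W-norm limits of finitely supported functions.\<close>
definition W_space :: "('d::finite lattice \<Rightarrow> 'd lattice \<Rightarrow> real) \<Rightarrow> ('d lattice \<Rightarrow> real) set" where
  "W_space w = {u. (\<forall>x. (\<lambda>y. w x y * (u x - u y)\<^sup>2) summable_on (UNIV - {x})) \<and>
      W_dens w u summable_on UNIV \<and>
      (\<exists>U :: nat \<Rightarrow> 'd lattice \<Rightarrow> real.
         (\<forall>n. finite {x. U n x \<noteq> 0}) \<and>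
         (\<forall>n. W_dens w (\<lambda>x. U n x - u x) summable_on UNIV) \<and>
         (\<lambda>n. W_norm2 w (\<lambda>x. U n x - u x)) \<longlonglongrightarrow> 0)}"

definition H_space :: "('d::finite lattice \<Rightarrow> 'd lattice \<Rightarrow> real) \<Rightarrow> ('d lattice \<Rightarrow> real) \<Rightarrow>
    ('d lattice \<Rightarrow> real) set" where
  "H_space w h = {u \<in> W_space w. (\<lambda>x. h x * (u x)\<^sup>2) summable_on UNIV}"

definition H_inner :: "real \<Rightarrow> ('d::finite lattice \<Rightarrow> 'd lattice \<Rightarrow> real) \<Rightarrow> ('d lattice \<Rightarrow> real) \<Rightarrow>
    ('d lattice \<Rightarrow> real) \<Rightarrow> ('d lattice \<Rightarrow> real) \<Rightarrow> real" where
  "H_inner a w h u v = (\<Sum>\<^sub>\<infinity>x\<in>UNIV. a * grad_prod w u v x + h x * u x * v x)"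

definition nonlin :: "real \<Rightarrow> real \<Rightarrow> real" where
  "nonlin p t = (if t = 0 then 0 else \<bar>t\<bar> powr (p - 2) * t * ln (t\<^sup>2))"

definition J_fun :: "real \<Rightarrow> real \<Rightarrow> real \<Rightarrow> ('d::finite lattice \<Rightarrow> 'd lattice \<Rightarrow> real) \<Rightarrow>
    ('d lattice \<Rightarrow> real) \<Rightarrow> ('d lattice \<Rightarrow> real) \<Rightarrow> real" where
  "J_fun a b p w h u =
     1/2 * H_inner a w h u u + b/4 * (grad_norm2 w u)\<^sup>2
     + 2 / p\<^sup>2 * (\<Sum>\<^sub>\<infinity>x\<in>UNIV. \<bar>u x\<bar> powr p)
     - 1 / p * (\<Sum>\<^sub>\<infinity>x\<in>UNIV. (if u x = 0 then 0 else \<bar>u x\<bar> powr p * ln ((u x)\<^sup>2)))"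

definition J_deriv :: "real \<Rightarrow> real \<Rightarrow> real \<Rightarrow> ('d::finite lattice \<Rightarrow> 'd lattice \<Rightarrow> real) \<Rightarrow>
    ('d lattice \<Rightarrow> real) \<Rightarrow> ('d lattice \<Rightarrow> real) \<Rightarrow> ('d lattice \<Rightarrow> real) \<Rightarrow> real" where
  "J_deriv a b p w h u \<phi> =
     H_inner a w h u \<phi> + b * grad_norm2 w u * (\<Sum>\<^sub>\<infinity>x\<in>UNIV. grad_prod w u \<phi> x)
     - (\<Sum>\<^sub>\<infinity>x\<in>UNIV. nonlin p (u x) * \<phi> x)"

definition pos_part :: "('d lattice \<Rightarrow> real) \<Rightarrow> 'd lattice \<Rightarrow> real" where
  "pos_part u = (\<lambda>x. max (u x) 0)"

definition neg_part :: "('d lattice \<Rightarrow> real) \<Rightarrow> 'd lattice \<Rightarrow> real" where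
  "neg_part u = (\<lambda>x. min (u x) 0)"

definition M_set :: "real \<Rightarrow> real \<Rightarrow> real \<Rightarrow> ('d::finite lattice \<Rightarrow> 'd lattice \<Rightarrow> real) \<Rightarrow>
    ('d lattice \<Rightarrow> real) \<Rightarrow> ('d lattice \<Rightarrow> real) set" where
  "M_set a b p w h = {v \<in> H_space w h. pos_part v \<noteq> (\<lambda>x. 0) \<and> neg_part v \<noteq> (\<lambda>x. 0) \<and>
       J_deriv a b p w h v (pos_part v) = 0 \<and> J_deriv a b p w h v (neg_part v) = 0}"

end

theory Submission
  imports Defs
begin


lemma bern_strict:
  fixes x al :: real
  assumes "0 < x" "x \<noteq> 1" "1 < al"
  shows "1 + al * (x - 1) < x powr al"
proof -
  define f where "f = (\<lambda>y::real. y powr al - al * y)"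
  have D: "DERIV f y :> al * y powr (al - 1) - al" if "0 < y" for y
    unfolding f_def using that
    by (auto intro!: derivative_eq_intros)
  show ?thesis
  proof (cases "x < 1")
    case True
    obtain z where z: "x < z" "z < 1" "f 1 - f x = (1 - x) * (al * z powr (al - 1) - al)"
      using MVT2[of x 1 f "\<lambda>y. al * y powr (al - 1) - al"] True D assms(1) by force
    have "z powr (al - 1) < 1 powr (al - 1)" using z assms by (intro powr_less_mono2) auto
    then have "z powr (al - 1) < 1" by simp
    then have "al * z powr (al - 1) - al < 0" using assms by simp
    then have "f 1 - f x < 0" using z True by (simp add: mult_pos_neg)
    then show ?thesis unfolding f_def by (simp add: algebra_simps)
  next
    case False
    then have x1: "1 < x" using assms by simp
    obtain z where z: "1 < z" "z < x" "f x - f 1 = (x - 1) * (al * z powr (al - 1) - al)"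
      using MVT2[of 1 x f "\<lambda>y. al * y powr (al - 1) - al"] x1 D by force
    have "1 < z powr (al - 1)" using z assms by (simp add: gr_one_powr)
    then have "al * z powr (al - 1) - al > 0" using assms by simp
    then have "f x - f 1 > 0" using z x1 by simp
    then show ?thesis unfolding f_def by (simp add: algebra_simps)
  qed
qed

lemma bern:
  fixes x al :: real
  assumes "0 < x" "1 < al"
  shows "1 + al * (x - 1) \<le> x powr al"
  using bern_strict[OF assms(1) _ assms(2)] by (cases "x = 1") auto

lemma aux_div_pos:
  fixes p A R :: real
  assumes "0 < p" "1 + (p/2) * A < R"
  shows "0 < (- A)/2 - (1 - R)/p"
proof -
  have "0 < (R - (1 + (p/2) * A)) / p" using assms by simp
  also have "(R - (1 + (p/2) * A)) / p = (- A)/2 - (1 - R)/p" using assms(1) by (simp add: field_simps)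
  finally show ?thesis .
qed

lemma aux_div_nonneg4:
  fixes p A R :: real
  assumes "0 < p" "1 + (p/4) * A \<le> R"
  shows "0 \<le> (- A)/4 - (1 - R)/p"
proof -
  have "0 \<le> (R - (1 + (p/4) * A)) / p" using assms by simp
  also have "(R - (1 + (p/4) * A)) / p = (- A)/4 - (1 - R)/p" using assms(1) by (simp add: field_simps)
  finally show ?thesis .
qed

lemma powr_half_sq:
  fixes r p :: real
  assumes "0 < r"
  shows "(r^2) powr (p/2) = r powr p" and "(r^4) powr (p/4) = r powr p"
proof -
  have "(r^2) powr (p/2) = (r powr 2) powr (p/2)" using assms by (simp add: powr_numeral)
  also have "\<dots> = r powr p" by (simp add: powr_powr)
  finally show "(r^2) powr (p/2) = r powr p" .
  have "(r^4) powr (p/4) = (r powr 4) powr (p/4)" using assms by (simp add: powr_numeral)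
  also have "\<dots> = r powr p" by (simp add: powr_powr)
  finally show "(r^4) powr (p/4) = r powr p" .
qed

lemma g_pos:
  fixes r p :: real
  assumes "0 < r" "r \<noteq> 1" "2 < p"
  shows "0 < (1 - r^2)/2 - (1 - r powr p)/p"
proof -
  have "r^2 \<noteq> 1" using assms by (simp add: power2_eq_1_iff)
  then have "1 + (p/2) * (r^2 - 1) < (r^2) powr (p/2)"
    using bern_strict[of "r^2" "p/2"] assms by simp
  then have "1 + (p/2) * (r^2 - 1) < r powr p" using powr_half_sq[OF assms(1)] by simp
  then have "0 < (- (r^2 - 1))/2 - (1 - r powr p)/p" using assms by (intro aux_div_pos) auto
  then show ?thesis by simp
qed

lemma g_nonneg:
  fixes r p :: real
  assumes "0 < r" "2 < p"
  shows "0 \<le> (1 - r^2)/2 - (1 - r powr p)/p"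
  using g_pos[OF assms(1) _ assms(2)] by (cases "r = 1") auto

lemma q_nonneg:
  fixes r p :: real
  assumes "0 < r" "4 < p"
  shows "0 \<le> (1 - r^4)/4 - (1 - r powr p)/p"
proof -
  have "1 + (p/4) * (r^4 - 1) \<le> (r^4) powr (p/4)"
    using bern[of "r^4" "p/4"] assms by simp
  then have "1 + (p/4) * (r^4 - 1) \<le> r powr p" using powr_half_sq[OF assms(1)] by simp
  then have "0 \<le> (- (r^4 - 1))/4 - (1 - r powr p)/p" using assms by (intro aux_div_nonneg4) auto
  then show ?thesis by simp
qed

lemma k_nonneg:
  fixes r p :: real
  assumes "0 < r"
  shows "0 \<le> 1 - r powr p + p/2 * r powr p * ln (r^2)"
proof -
  define y where "y = r powr p"
  have y: "0 < y" using assms by (simp add: y_def)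
  have ly: "ln y = p/2 * ln (r^2)" using assms by (simp add: y_def ln_powr ln_realpow)
  have "ln (1/y) \<le> 1/y - 1" using y by (intro ln_le_minus_one) simp
  then have "- ln y \<le> 1/y - 1" using y by (simp add: ln_div)
  then have "y * (- ln y) \<le> y * (1/y - 1)" using y by (intro mult_left_mono) auto
  moreover have "y * (1/y - 1) = 1 - y" using y by (simp add: field_simps)
  ultimately have "0 \<le> 1 - y + y * ln y" by (simp add: algebra_simps)
  then show ?thesis by (simp add: ly y_def[symmetric] algebra_simps)
qed



lemma alg_ineq:
  fixes a b p r t R T lr lt X1 X2 C H1 H2 P1 P2 L1 L2 :: real
  assumes a: "0 < a" and b: "0 < b" and p: "0 < p" and r: "0 < r" and t: "0 < t"
    and X1: "0 \<le> X1" and X2: "0 \<le> X2" and C: "0 \<le> C"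
    and P1: "0 \<le> P1" and P2: "0 \<le> P2"
    and A1: "0 < a*X1 + H1" and A2: "0 < a*X2 + H2"
    and N1: "a*(X1+C) + H1 + b*(X1+X2+2*C)*(X1+C) = L1"
    and N2: "a*(X2+C) + H2 + b*(X1+X2+2*C)*(X2+C) = L2"
    and gr: "0 \<le> (1 - r^2)/2 - (1 - R)/p" and gt: "0 \<le> (1 - t^2)/2 - (1 - T)/p"
    and gs: "0 < (1 - r^2)/2 - (1 - R)/p \<or> 0 < (1 - t^2)/2 - (1 - T)/p"
    and qr: "0 \<le> (1 - r^4)/4 - (1 - R)/p" and qt: "0 \<le> (1 - t^4)/4 - (1 - T)/p"
    and kr: "0 \<le> 1 - R + p/2 * R * lr" and kt: "0 \<le> 1 - T + p/2 * T * lt"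
  shows "1/2*(a*(X1+X2+2*C) + H1 + H2) + b/4*(X1+X2+2*C)^2 + 2/p^2*(P1+P2) - 1/p*(L1+L2)
     > 1/2*(a*(r^2*X1 + t^2*X2 + 2*r*t*C) + r^2*H1 + t^2*H2) + b/4*(r^2*X1+t^2*X2+2*r*t*C)^2
       + 2/p^2*(R*P1 + T*P2) - 1/p*(R*(L1 + lr*P1) + T*(L2 + lt*P2))"
proof -
  define g1 where "g1 = (1 - r^2)/2 - (1 - R)/p"
  define g2 where "g2 = (1 - t^2)/2 - (1 - T)/p"
  define q1 where "q1 = (1 - r^4)/4 - (1 - R)/p"
  define q2 where "q2 = (1 - t^4)/4 - (1 - T)/p"
  define m where "m = (1 - r*t) - (1 - R)/p - (1 - T)/p"
  define D where "D = r^2*X1+t^2*X2+2*r*t*C"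
  define X where "X = X1 + C"
  define Y where "Y = X2 + C"
  define Q where "Q = (X+Y)^2/4 - D^2/4 - (X+Y)*((1-R)*X + (1-T)*Y)/p"
  define k1 where "k1 = 1 - R + p/2 * R * lr"
  define k2 where "k2 = 1 - T + p/2 * T * lt"
  have iden: "(1/2*(a*(X1+X2+2*C) + H1 + H2) + b/4*(X1+X2+2*C)^2 + 2/p^2*(P1+P2) - 1/p*(L1+L2))
     - (1/2*(a*(r^2*X1 + t^2*X2 + 2*r*t*C) + r^2*H1 + t^2*H2) + b/4*(r^2*X1+t^2*X2+2*r*t*C)^2
       + 2/p^2*(R*P1 + T*P2) - 1/p*(R*(L1 + lr*P1) + T*(L2 + lt*P2)))
     = g1*(a*X1+H1) + g2*(a*X2+H2) + a*C*m + b*Q + 2/p^2*(k1*P1 + k2*P2)"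
    unfolding g1_def g2_def m_def Q_def D_def X_def Y_def k1_def k2_def N1[symmetric] N2[symmetric]
    using p by (simp add: field_simps power2_eq_square)
  have m: "g1 + g2 \<le> m"
  proof -
    have "m - (g1 + g2) = (r - t)^2/2" unfolding m_def g1_def g2_def by (simp add: field_simps power2_eq_square)
    then show ?thesis by (smt (verit) zero_le_power2 divide_nonneg_pos)
  qed
  have g1: "0 \<le> g1" and g2: "0 \<le> g2" using gr gt g1_def g2_def by auto
  have Cm: "0 \<le> a*C*m" using a C m g1 g2 by simp
  have X: "0 \<le> X" and Y: "0 \<le> Y" using X1 X2 C by (auto simp: X_def Y_def)
  have D0: "0 \<le> D" unfolding D_def using X1 X2 C r t by simp
  have D1: "D \<le> r^2*X + t^2*Y"
  proof -
    have "2*r*t*C \<le> (r^2+t^2)*C"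
    proof -
      have "2*r*t \<le> r^2+t^2" using sum_squares_bound[of r t] .
      then show ?thesis using C by (intro mult_right_mono) auto
    qed
    then show ?thesis unfolding D_def X_def Y_def by (simp add: algebra_simps)
  qed
  have D2: "D^2 \<le> (r^2*X + t^2*Y)^2" using D0 D1 by (intro power_mono) auto
  have Qge: "X^2*q1 + Y^2*q2 + X*Y*(q1+q2) \<le> Q"
  proof -
    have "Q \<ge> (X+Y)^2/4 - (r^2*X + t^2*Y)^2/4 - (X+Y)*((1-R)*X + (1-T)*Y)/p"
      unfolding Q_def using D2 by simp
    moreover have "(X+Y)^2/4 - (r^2*X + t^2*Y)^2/4 - (X+Y)*((1-R)*X + (1-T)*Y)/p
        = X^2*q1 + Y^2*q2 + X*Y*(q1+q2) + X*Y*((r^2-t^2)^2/4)"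
      unfolding q1_def q2_def using p by (simp add: field_simps power2_eq_square eval_nat_numeral)
    moreover have "0 \<le> X*Y*((r^2-t^2)^2/4)" using X Y by simp
    ultimately show ?thesis by linarith
  qed
  have q1: "0 \<le> q1" and q2: "0 \<le> q2" using qr qt q1_def q2_def by auto
  have Q: "0 \<le> Q"
  proof -
    have "0 \<le> X^2*q1 + Y^2*q2 + X*Y*(q1+q2)" using X Y q1 q2 by simp
    then show ?thesis using Qge by linarith
  qed
  have bQ: "0 \<le> b*Q" using b Q by simp
  have kP: "0 \<le> 2/p^2*(k1*P1 + k2*P2)" using kr kt P1 P2 k1_def k2_def by simp
  have pos: "0 < g1*(a*X1+H1) + g2*(a*X2+H2)"
  proof -
    have "0 \<le> g1*(a*X1+H1)" "0 \<le> g2*(a*X2+H2)" using g1 g2 A1 A2 by auto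
    moreover have "0 < g1*(a*X1+H1) \<or> 0 < g2*(a*X2+H2)" using gs A1 A2 g1_def g2_def by auto
    ultimately show ?thesis by linarith
  qed
  show ?thesis using iden Cm bQ kP pos by linarith
qed



definition ellf :: "real \<Rightarrow> real \<Rightarrow> real" where
  "ellf p z = (if z = 0 then 0 else \<bar>z\<bar> powr p * ln (z\<^sup>2))"

lemma real_summable_abs_bound:
  fixes f g :: "'a \<Rightarrow> real"
  assumes "g summable_on A" "\<And>x. x \<in> A \<Longrightarrow> \<bar>f x\<bar> \<le> g x"
  shows "f summable_on A"
proof -
  have "(\<lambda>x. norm (f x)) summable_on A"
    by (rule summable_on_comparison_test[OF assms(1)]) (use assms(2) in auto)
  then show ?thesis by (rule abs_summable_summable)
qed

lemma single_le_infsum: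
  fixes f :: "'a \<Rightarrow> real"
  assumes "f summable_on UNIV" "\<And>x. 0 \<le> f x"
  shows "f x \<le> infsum f UNIV"
proof -
  have "infsum f {x} \<le> infsum f UNIV"
    using assms by (intro infsum_mono_neutral) auto
  then show ?thesis by simp
qed

lemma add_sum:
  fixes f g :: "'a \<Rightarrow> real"
  assumes f: "f summable_on A" and g: "g summable_on A"
  shows "infsum (\<lambda>x. f x + c * g x) A = infsum f A + c * infsum g A"
    and "(\<lambda>x. f x + c * g x) summable_on A"
proof -
  have g': "(\<lambda>x. c * g x) summable_on A" using g by (rule summable_on_cmult_right)
  show "infsum (\<lambda>x. f x + c * g x) A = infsum f A + c * infsum g A"
    using infsum_add[OF f g'] infsum_cmult_right'[of c g A] by simp
  show "(\<lambda>x. f x + c * g x) summable_on A" using summable_on_add[OF f g'] .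
qed

lemma cm_sum:
  fixes g :: "'a \<Rightarrow> real"
  assumes g: "g summable_on A"
  shows "infsum (\<lambda>x. c * g x) A = c * infsum g A" and "(\<lambda>x. c * g x) summable_on A"
  using infsum_cmult_right'[of c g A] summable_on_cmult_right[OF g] by auto

lemma infsum_lin2:
  fixes f1 f2 :: "'a \<Rightarrow> real"
  assumes "f1 summable_on A" "f2 summable_on A"
  shows "infsum (\<lambda>x. c1 * f1 x + c2 * f2 x) A = c1 * infsum f1 A + c2 * infsum f2 A"
  using add_sum(1)[OF cm_sum(2)[OF assms(1)] assms(2)] cm_sum(1)[OF assms(1)] by simp

lemma infsum_lin3:
  fixes f1 f2 f3 :: "'a \<Rightarrow> real"
  assumes s: "f1 summable_on A" "f2 summable_on A" "f3 summable_on A"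
  shows "infsum (\<lambda>x. c1 * f1 x + c2 * f2 x + c3 * f3 x) A = c1 * infsum f1 A + c2 * infsum f2 A + c3 * infsum f3 A"
proof -
  have s2: "(\<lambda>x. c1 * f1 x + c2 * f2 x) summable_on A"
    using add_sum(2)[OF cm_sum(2)[OF s(1)] s(2)] .
  show ?thesis using add_sum(1)[OF s2 s(3)] infsum_lin2[OF s(1,2)] by simp
qed

lemma infsum_lin4:
  fixes f1 f2 f3 f4 :: "'a \<Rightarrow> real"
  assumes s: "f1 summable_on A" "f2 summable_on A" "f3 summable_on A" "f4 summable_on A"
  shows "infsum (\<lambda>x. c1 * f1 x + c2 * f2 x + c3 * f3 x + c4 * f4 x) A
    = c1 * infsum f1 A + c2 * infsum f2 A + c3 * infsum f3 A + c4 * infsum f4 A"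
proof -
  have s2: "(\<lambda>x. c1 * f1 x + c2 * f2 x) summable_on A"
    using add_sum(2)[OF cm_sum(2)[OF s(1)] s(2)] .
  have s3: "(\<lambda>x. c1 * f1 x + c2 * f2 x + c3 * f3 x) summable_on A"
    using add_sum(2)[OF s2 s(3)] .
  show ?thesis using add_sum(1)[OF s3 s(4)] infsum_lin3[OF s(1,2,3)] by simp
qed

lemma infsum_lin5:
  fixes f1 f2 f3 f4 f5 :: "'a \<Rightarrow> real"
  assumes s: "f1 summable_on A" "f2 summable_on A" "f3 summable_on A" "f4 summable_on A" "f5 summable_on A"
  shows "infsum (\<lambda>x. c1 * f1 x + c2 * f2 x + c3 * f3 x + c4 * f4 x + c5 * f5 x) A
    = c1 * infsum f1 A + c2 * infsum f2 A + c3 * infsum f3 A + c4 * infsum f4 A + c5 * infsum f5 A"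
proof -
  have s2: "(\<lambda>x. c1 * f1 x + c2 * f2 x) summable_on A"
    using add_sum(2)[OF cm_sum(2)[OF s(1)] s(2)] .
  have s3: "(\<lambda>x. c1 * f1 x + c2 * f2 x + c3 * f3 x) summable_on A"
    using add_sum(2)[OF s2 s(3)] .
  have s4: "(\<lambda>x. c1 * f1 x + c2 * f2 x + c3 * f3 x + c4 * f4 x) summable_on A"
    using add_sum(2)[OF s3 s(4)] .
  show ?thesis using add_sum(1)[OF s4 s(5)] infsum_lin4[OF s(1,2,3,4)] by simp
qed

lemma half_dist:
  fixes a b c A B C :: real
  shows "1/2 * (a*A + b*B + c*C) = a*(1/2*A) + b*(1/2*B) + c*(1/2*C)"
  by (simp add: algebra_simps)

locale S =
  fixes w :: "'d::finite lattice \<Rightarrow> 'd lattice \<Rightarrow> real" and u :: "'d lattice \<Rightarrow> real"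
  assumes wpos: "\<And>x y. x \<noteq> y \<Longrightarrow> 0 < w x y"
    and inner: "\<And>x. (\<lambda>y. w x y * (u x - u y)^2) summable_on (UNIV - {x})"
begin

abbreviation "P \<equiv> pos_part u"
abbreviation "N \<equiv> neg_part u"

lemma PN_basic:
  "0 \<le> P x" "N x \<le> 0" "P x * N x = 0" "u x = P x + N x"
  "(P x)^2 \<le> (u x)^2" "(N x)^2 \<le> (u x)^2" "\<bar>P x\<bar> \<le> \<bar>u x\<bar>" "\<bar>N x\<bar> \<le> \<bar>u x\<bar>"
  by (auto simp: pos_part_def neg_part_def max_def min_def)

lemma diff_facts:
  "0 \<le> (P x - P y) * (N x - N y)"
  "(P x - P y)^2 \<le> (u x - u y)^2" "(N x - N y)^2 \<le> (u x - u y)^2"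
  "(P x - P y) * (N x - N y) \<le> (u x - u y)^2"
proof -
  have ex: "(P x - P y) * (N x - N y) = - (P x * N y) - (P y * N x)"
  proof -
    have "(P x - P y) * (N x - N y) = P x * N x + P y * N y - P x * N y - P y * N x"
      by (simp add: algebra_simps)
    then show ?thesis using PN_basic(3)[of x] PN_basic(3)[of y] by linarith
  qed
  have n1: "P x * N y \<le> 0" by (rule mult_nonneg_nonpos[OF PN_basic(1) PN_basic(2)])
  have n2: "P y * N x \<le> 0" by (rule mult_nonneg_nonpos[OF PN_basic(1) PN_basic(2)])
  show 0: "0 \<le> (P x - P y) * (N x - N y)" unfolding ex using n1 n2 by linarith
  have e: "u x - u y = (P x - P y) + (N x - N y)" using PN_basic(4)[of x] PN_basic(4)[of y] by simp
  have sq: "(u x - u y)^2 = (P x - P y)^2 + (N x - N y)^2 + 2 * ((P x - P y) * (N x - N y))"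
    unfolding e by (simp add: power2_eq_square algebra_simps)
  have z1: "0 \<le> (P x - P y)^2" "0 \<le> (N x - N y)^2" by auto
  show "(P x - P y)^2 \<le> (u x - u y)^2" "(N x - N y)^2 \<le> (u x - u y)^2"
    using sq 0 z1 by linarith+
  show "(P x - P y) * (N x - N y) \<le> (u x - u y)^2" using sq 0 z1 by linarith
qed

lemma wbound:
  fixes W a b c :: real
  assumes "0 \<le> W" "0 \<le> a * b" "a * b \<le> c"
  shows "W * a * b \<le> W * c" "0 \<le> W * a * b"
proof -
  have "W * (a * b) \<le> W * c" using assms by (intro mult_left_mono) auto
  then show "W * a * b \<le> W * c" by (simp add: mult.assoc)
  have "0 \<le> W * (a * b)" using assms by (simp add: mult_nonneg_nonneg)
  then show "0 \<le> W * a * b" by (simp add: mult.assoc)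
qed

lemma diff_prods:
  "0 \<le> (P x - P y) * (P x - P y)" "(P x - P y) * (P x - P y) \<le> (u x - u y)^2"
  "0 \<le> (N x - N y) * (N x - N y)" "(N x - N y) * (N x - N y) \<le> (u x - u y)^2"
  "0 \<le> (P x - P y) * (N x - N y)" "(P x - P y) * (N x - N y) \<le> (u x - u y)^2"
  using diff_facts[of x y] by (simp_all add: power2_eq_square)

lemma w_nonneg: "y \<in> UNIV - {x} \<Longrightarrow> 0 \<le> w x y"
  using wpos[of x y] by simp

lemma inner_sums:
  "(\<lambda>y. w x y * (P x - P y) * (P x - P y)) summable_on (UNIV - {x})"
  "(\<lambda>y. w x y * (N x - N y) * (N x - N y)) summable_on (UNIV - {x})"
  "(\<lambda>y. w x y * (P x - P y) * (N x - N y)) summable_on (UNIV - {x})"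
proof -
  show "(\<lambda>y. w x y * (P x - P y) * (P x - P y)) summable_on (UNIV - {x})"
    by (rule summable_on_comparison_test[OF inner[of x]]) (rule wbound[OF w_nonneg diff_prods(1,2)], assumption)+
  show "(\<lambda>y. w x y * (N x - N y) * (N x - N y)) summable_on (UNIV - {x})"
    by (rule summable_on_comparison_test[OF inner[of x]]) (rule wbound[OF w_nonneg diff_prods(3,4)], assumption)+
  show "(\<lambda>y. w x y * (P x - P y) * (N x - N y)) summable_on (UNIV - {x})"
    by (rule summable_on_comparison_test[OF inner[of x]]) (rule wbound[OF w_nonneg diff_prods(5,6)], assumption)+
qed

lemma G_nonneg:
  "0 \<le> grad_prod w P P x" "0 \<le> grad_prod w N N x" "0 \<le> grad_prod w P N x"
proof -
  have "0 \<le> infsum (\<lambda>y. w x y * (P x - P y) * (P x - P y)) (UNIV - {x})"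
    by (rule infsum_nonneg) (rule wbound[OF w_nonneg diff_prods(1,2)], assumption)
  then show "0 \<le> grad_prod w P P x" unfolding grad_prod_def by simp
  have "0 \<le> infsum (\<lambda>y. w x y * (N x - N y) * (N x - N y)) (UNIV - {x})"
    by (rule infsum_nonneg) (rule wbound[OF w_nonneg diff_prods(3,4)], assumption)
  then show "0 \<le> grad_prod w N N x" unfolding grad_prod_def by simp
  have "0 \<le> infsum (\<lambda>y. w x y * (P x - P y) * (N x - N y)) (UNIV - {x})"
    by (rule infsum_nonneg) (rule wbound[OF w_nonneg diff_prods(5,6)], assumption)
  then show "0 \<le> grad_prod w P N x" unfolding grad_prod_def by simp
qed

lemma grad_lin:
  assumes v: "\<And>x. v x = r * P x + t * N x" and ph: "\<And>x. \<phi> x = r' * P x + t' * N x"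
  shows "grad_prod w v \<phi> x = r*r' * grad_prod w P P x + t*t' * grad_prod w N N x
            + (r*t' + t*r') * grad_prod w P N x"
proof -
  define f1 where "f1 = (\<lambda>y. w x y * (P x - P y) * (P x - P y))"
  define f2 where "f2 = (\<lambda>y. w x y * (N x - N y) * (N x - N y))"
  define f3 where "f3 = (\<lambda>y. w x y * (P x - P y) * (N x - N y))"
  have s: "f1 summable_on (UNIV - {x})" "f2 summable_on (UNIV - {x})" "f3 summable_on (UNIV - {x})"
    using inner_sums unfolding f1_def f2_def f3_def by auto
  have eq: "w x y * (v x - v y) * (\<phi> x - \<phi> y) = r*r' * f1 y + t*t' * f2 y + (r*t' + t*r') * f3 y" for y
    unfolding v ph f1_def f2_def f3_def by (simp add: algebra_simps)
  have "infsum (\<lambda>y. w x y * (v x - v y) * (\<phi> x - \<phi> y)) (UNIV - {x})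
      = infsum (\<lambda>y. r*r' * f1 y + t*t' * f2 y + (r*t' + t*r') * f3 y) (UNIV - {x})"
    by (simp only: eq)
  also have "\<dots> = r*r' * infsum f1 (UNIV - {x}) + t*t' * infsum f2 (UNIV - {x}) + (r*t' + t*r') * infsum f3 (UNIV - {x})"
    by (rule infsum_lin3[OF s])
  finally have I: "infsum (\<lambda>y. w x y * (v x - v y) * (\<phi> x - \<phi> y)) (UNIV - {x})
     = r*r' * infsum f1 (UNIV - {x}) + t*t' * infsum f2 (UNIV - {x}) + (r*t' + t*r') * infsum f3 (UNIV - {x})" .
  have g: "grad_prod w P P x = 1/2 * infsum f1 (UNIV - {x})" "grad_prod w N N x = 1/2 * infsum f2 (UNIV - {x})"
    "grad_prod w P N x = 1/2 * infsum f3 (UNIV - {x})" "grad_prod w v \<phi> x = 1/2 * infsum (\<lambda>y. w x y * (v x - v y) * (\<phi> x - \<phi> y)) (UNIV - {x})"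
    unfolding grad_prod_def f1_def f2_def f3_def by (rule refl)+
  have "grad_prod w v \<phi> x = 1/2 * infsum (\<lambda>y. w x y * (v x - v y) * (\<phi> x - \<phi> y)) (UNIV - {x})" by (rule g(4))
  also have "\<dots> = 1/2 * (r*r' * infsum f1 (UNIV - {x}) + t*t' * infsum f2 (UNIV - {x}) + (r*t' + t*r') * infsum f3 (UNIV - {x}))"
    by (rule arg_cong[OF I])
  also have "\<dots> = r*r' * (1/2 * infsum f1 (UNIV - {x})) + t*t' * (1/2 * infsum f2 (UNIV - {x})) + (r*t' + t*r') * (1/2 * infsum f3 (UNIV - {x}))"
    by (rule half_dist)
  also have "\<dots> = r*r' * grad_prod w P P x + t*t' * grad_prod w N N x + (r*t' + t*r') * grad_prod w P N x"
    by (simp only: g(1-3))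
  finally show ?thesis .
qed

lemma u_form: "u x = 1 * P x + 1 * N x" using PN_basic(4) by simp

lemma Guu: "grad_prod w u u x = grad_prod w P P x + grad_prod w N N x + 2 * grad_prod w P N x"
proof -
  have uf: "\<And>y. u y = 1 * P y + 1 * N y" by (rule u_form)
  show ?thesis using grad_lin[OF uf uf, of x] by simp
qed

lemma Guu_nonneg: "0 \<le> grad_prod w u u x"
  using Guu[of x] G_nonneg[of x] by linarith

end

lemma pow_bound:
  fixes a M p :: real
  assumes "0 \<le> a" "a \<le> M" "2 \<le> p"
  shows "a powr p \<le> M powr (p-2) * a^2"
proof (cases "a = 0")
  case True then show ?thesis by simp
next
  case False
  then have a: "0 < a" using assms by simp
  have "a powr p = a powr (p-2) * a powr 2" by (simp add: powr_add[symmetric])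
  also have "\<dots> = a powr (p-2) * a^2" using a by simp
  also have "\<dots> \<le> M powr (p-2) * a^2"
    using assms a by (intro mult_right_mono powr_mono2) auto
  finally show ?thesis .
qed

lemma log_bound:
  fixes a M p :: real
  assumes "0 < a" "a \<le> M" "3 < p"
  shows "a powr (p-2) * \<bar>ln a\<bar> \<le> 1 + M powr (p-1)"
proof (cases "a \<le> 1")
  case True
  have la: "ln a \<le> 0" using True assms by simp
  have "ln (1/a) \<le> 1/a - 1" using assms by (intro ln_le_minus_one) simp
  then have "- ln a \<le> 1/a - 1" using assms by (simp add: ln_div)
  then have "a * (- ln a) \<le> a * (1/a - 1)" using assms by (intro mult_left_mono) auto
  also have "a * (1/a - 1) = 1 - a" using assms by (simp add: field_simps)
  finally have b1: "a * (- ln a) \<le> 1" using assms by simp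
  have b0: "0 \<le> a * (- ln a)" using mult_nonneg_nonpos[of a "ln a"] la assms by simp
  have b2: "a powr (p-3) \<le> 1" using True assms by (intro powr_le1) auto
  have "a powr ((p-3) + 1) = a powr (p-3) * a powr 1" by (rule powr_add)
  then have "a powr (p-2) = a powr (p-3) * a" using assms by (simp add: powr_one)
  then have "a powr (p-2) * \<bar>ln a\<bar> = a powr (p-3) * (a * (- ln a))" using la assms by simp
  also have "\<dots> \<le> 1 * 1" using b0 b1 b2 by (intro mult_mono) auto
  finally have "a powr (p-2) * \<bar>ln a\<bar> \<le> 1" by simp
  moreover have "0 \<le> M powr (p-1)" by simp
  ultimately show ?thesis by linarith
next
  case False
  then have a1: "1 < a" by simp
  have la: "0 \<le> ln a" using a1 by simp
  have "ln a \<le> a - 1" using assms by (intro ln_le_minus_one) simp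
  then have la2: "ln a \<le> a" by simp
  have "a powr (p-2) * \<bar>ln a\<bar> = a powr (p-2) * ln a" using la by simp
  also have "\<dots> \<le> a powr (p-2) * a" using la2 by (intro mult_left_mono) auto
  also have "a powr (p-2) * a = a powr (p-1)"
  proof -
    have "a powr ((p-2) + 1) = a powr (p-2) * a powr 1" by (rule powr_add)
    then show ?thesis using assms by (simp add: powr_one)
  qed
  also have "\<dots> \<le> M powr (p-1)" using assms by (intro powr_mono2) auto
  finally show ?thesis by simp
qed

lemma ellf_bound:
  fixes z M p :: real
  assumes "\<bar>z\<bar> \<le> M" "3 < p"
  shows "\<bar>ellf p z\<bar> \<le> 2 * (1 + M powr (p-1)) * z^2"
proof (cases "z = 0")
  case True then show ?thesis by (simp add: ellf_def)
next
  case False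
  define a where "a = \<bar>z\<bar>"
  have a: "0 < a" "a \<le> M" using False assms by (auto simp: a_def)
  have z2: "z^2 = a^2" by (simp add: a_def)
  have lz: "ln (z^2) = 2 * ln a" using a by (simp add: z2 ln_realpow)
  have pa: "a powr p = a powr (p-2) * a^2"
  proof -
    have "a powr p = a powr (p-2) * a powr 2" by (simp add: powr_add[symmetric])
    then show ?thesis using a by simp
  qed
  have "\<bar>ellf p z\<bar> = a powr p * (2 * \<bar>ln a\<bar>)"
    using False by (simp add: ellf_def a_def[symmetric] lz abs_mult)
  also have "\<dots> = 2 * (a powr (p-2) * \<bar>ln a\<bar>) * a^2" by (simp add: pa)
  also have "\<dots> \<le> 2 * (1 + M powr (p-1)) * a^2"
    using log_bound[OF a assms(2)] by (intro mult_right_mono) auto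
  finally show ?thesis by (simp add: z2)
qed

lemma ellf_scale:
  fixes r z p :: real
  assumes "0 < r"
  shows "ellf p (r * z) = r powr p * (ellf p z + ln (r^2) * \<bar>z\<bar> powr p)"
proof (cases "z = 0")
  case True then show ?thesis by (simp add: ellf_def)
next
  case False
  have "ln ((r*z)^2) = ln (r^2) + ln (z^2)" using False assms by (simp add: power_mult_distrib ln_mult)
  moreover have "\<bar>r*z\<bar> powr p = r powr p * \<bar>z\<bar> powr p" using assms by (simp add: abs_mult powr_mult)
  ultimately show ?thesis using False assms by (simp add: ellf_def algebra_simps)
qed

lemma pow_cancel2:
  fixes z p :: real
  shows "\<bar>z\<bar> powr (p-2) * z * z = \<bar>z\<bar> powr p"
proof (cases "z = 0")
  case True then show ?thesis by simp
next
  case False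
  have "\<bar>z\<bar> powr ((p-2) + 2) = \<bar>z\<bar> powr (p-2) * \<bar>z\<bar> powr 2" by (rule powr_add)
  then have "\<bar>z\<bar> powr p = \<bar>z\<bar> powr (p-2) * \<bar>z\<bar> powr 2" by simp
  also have "\<bar>z\<bar> powr 2 = z * z" by (simp add: power2_eq_square[symmetric])
  finally show ?thesis by (metis mult.assoc)
qed

locale S2 = S w u for w :: "'d::finite lattice \<Rightarrow> 'd lattice \<Rightarrow> real" and u +
  fixes h :: "'d lattice \<Rightarrow> real" and p :: real
  assumes Wsum: "W_dens w u summable_on UNIV"
    and hsum: "(\<lambda>x. h x * (u x)^2) summable_on UNIV"
    and hnn: "\<And>x. 0 \<le> h x" and p3: "3 < p"
begin

lemma u2_sum: "(\<lambda>x. (u x)^2) summable_on UNIV"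
  by (rule summable_on_comparison_test[OF Wsum]) (use Guu_nonneg in \<open>auto simp: W_dens_def\<close>)

lemma Guu_sum: "(\<lambda>x. grad_prod w u u x) summable_on UNIV"
  by (rule summable_on_comparison_test[OF Wsum]) (use Guu_nonneg in \<open>auto simp: W_dens_def\<close>)

lemma G_sums:
  "(\<lambda>x. grad_prod w P P x) summable_on UNIV"
  "(\<lambda>x. grad_prod w N N x) summable_on UNIV"
  "(\<lambda>x. grad_prod w P N x) summable_on UNIV"
proof -
  have a: "grad_prod w P P x \<le> grad_prod w u u x" "grad_prod w N N x \<le> grad_prod w u u x"
     "grad_prod w P N x \<le> grad_prod w u u x" for x
    using Guu[of x] G_nonneg[of x] by linarith+
  show "(\<lambda>x. grad_prod w P P x) summable_on UNIV"
    by (rule summable_on_comparison_test[OF Guu_sum]) (use a G_nonneg in auto)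
  show "(\<lambda>x. grad_prod w N N x) summable_on UNIV"
    by (rule summable_on_comparison_test[OF Guu_sum]) (use a G_nonneg in auto)
  show "(\<lambda>x. grad_prod w P N x) summable_on UNIV"
    by (rule summable_on_comparison_test[OF Guu_sum]) (use a G_nonneg in auto)
qed

lemma h_sums:
  "(\<lambda>x. h x * (P x)^2) summable_on UNIV"
  "(\<lambda>x. h x * (N x)^2) summable_on UNIV"
proof -
  have a: "h x * (P x)^2 \<le> h x * (u x)^2" "h x * (N x)^2 \<le> h x * (u x)^2"
    "0 \<le> h x * (P x)^2" "0 \<le> h x * (N x)^2" for x
    using hnn[of x] PN_basic[of x] by (auto intro: mult_left_mono)
  show "(\<lambda>x. h x * (P x)^2) summable_on UNIV"
    by (rule summable_on_comparison_test[OF hsum]) (use a in auto)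
  show "(\<lambda>x. h x * (N x)^2) summable_on UNIV"
    by (rule summable_on_comparison_test[OF hsum]) (use a in auto)
qed

definition "M = sqrt (infsum (\<lambda>x. (u x)^2) UNIV)"

lemma u_bound: "\<bar>u x\<bar> \<le> M"
proof -
  have "(u x)^2 \<le> infsum (\<lambda>x. (u x)^2) UNIV"
    using single_le_infsum[OF u2_sum] by simp
  then have "sqrt ((u x)^2) \<le> M" unfolding M_def by (rule real_sqrt_le_mono)
  then show ?thesis by simp
qed

lemma PN_bound: "\<bar>P x\<bar> \<le> M" "\<bar>N x\<bar> \<le> M"
  using u_bound PN_basic order_trans by blast+

lemma pow_sums:
  "(\<lambda>x. \<bar>P x\<bar> powr p) summable_on UNIV"
  "(\<lambda>x. \<bar>N x\<bar> powr p) summable_on UNIV"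
proof -
  have g: "(\<lambda>x. M powr (p-2) * (u x)^2) summable_on UNIV"
    using u2_sum by (rule summable_on_cmult_right)
  have "\<bar>P x\<bar> powr p \<le> M powr (p-2) * (u x)^2" for x
  proof -
    have "\<bar>P x\<bar> powr p \<le> M powr (p-2) * \<bar>P x\<bar>^2" using PN_bound p3 by (intro pow_bound) auto
    also have "\<dots> \<le> M powr (p-2) * (u x)^2" using PN_basic by (intro mult_left_mono) auto
    finally show ?thesis .
  qed
  then show "(\<lambda>x. \<bar>P x\<bar> powr p) summable_on UNIV"
    by (rule summable_on_comparison_test[OF g]) auto
  have "\<bar>N x\<bar> powr p \<le> M powr (p-2) * (u x)^2" for x
  proof -
    have "\<bar>N x\<bar> powr p \<le> M powr (p-2) * \<bar>N x\<bar>^2" using PN_bound p3 by (intro pow_bound) auto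
    also have "\<dots> \<le> M powr (p-2) * (u x)^2" using PN_basic by (intro mult_left_mono) auto
    finally show ?thesis .
  qed
  then show "(\<lambda>x. \<bar>N x\<bar> powr p) summable_on UNIV"
    by (rule summable_on_comparison_test[OF g]) auto
qed

lemma ell_sums:
  "(\<lambda>x. ellf p (P x)) summable_on UNIV"
  "(\<lambda>x. ellf p (N x)) summable_on UNIV"
proof -
  have g: "(\<lambda>x. 2 * (1 + M powr (p-1)) * (u x)^2) summable_on UNIV"
    using u2_sum by (rule summable_on_cmult_right)
  have "\<bar>ellf p (P x)\<bar> \<le> 2 * (1 + M powr (p-1)) * (u x)^2" for x
  proof -
    have "\<bar>ellf p (P x)\<bar> \<le> 2 * (1 + M powr (p-1)) * (P x)^2" using PN_bound p3 by (intro ellf_bound) auto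
    also have "\<dots> \<le> 2 * (1 + M powr (p-1)) * (u x)^2"
      using PN_basic by (intro mult_left_mono) (auto intro: add_nonneg_nonneg)
    finally show ?thesis .
  qed
  then show "(\<lambda>x. ellf p (P x)) summable_on UNIV"
    by (rule real_summable_abs_bound[OF g])
  have "\<bar>ellf p (N x)\<bar> \<le> 2 * (1 + M powr (p-1)) * (u x)^2" for x
  proof -
    have "\<bar>ellf p (N x)\<bar> \<le> 2 * (1 + M powr (p-1)) * (N x)^2" using PN_bound p3 by (intro ellf_bound) auto
    also have "\<dots> \<le> 2 * (1 + M powr (p-1)) * (u x)^2"
      using PN_basic by (intro mult_left_mono) (auto intro: add_nonneg_nonneg)
    finally show ?thesis .
  qed
  then show "(\<lambda>x. ellf p (N x)) summable_on UNIV"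
    by (rule real_summable_abs_bound[OF g])
qed



lemma sumG_lin:
  assumes v: "\<And>x. v x = r * P x + t * N x" and ph: "\<And>x. \<phi> x = r' * P x + t' * N x"
  shows "infsum (\<lambda>x. grad_prod w v \<phi> x) UNIV = r*r' * infsum (\<lambda>x. grad_prod w P P x) UNIV
     + t*t' * infsum (\<lambda>x. grad_prod w N N x) UNIV + (r*t' + t*r') * infsum (\<lambda>x. grad_prod w P N x) UNIV"
proof -
  have e: "\<And>x. grad_prod w v \<phi> x = r*r' * grad_prod w P P x + t*t' * grad_prod w N N x
            + (r*t' + t*r') * grad_prod w P N x" using grad_lin[OF v ph] .
  show ?thesis
    by (simp only: e infsum_lin3[OF G_sums])
qed

lemma H_lin:
  assumes v: "\<And>x. v x = r * P x + t * N x" and ph: "\<And>x. \<phi> x = r' * P x + t' * N x"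
  shows "H_inner a w h v \<phi> = a * (r*r' * infsum (\<lambda>x. grad_prod w P P x) UNIV
     + t*t' * infsum (\<lambda>x. grad_prod w N N x) UNIV + (r*t' + t*r') * infsum (\<lambda>x. grad_prod w P N x) UNIV)
     + r*r' * infsum (\<lambda>x. h x * (P x)^2) UNIV + t*t' * infsum (\<lambda>x. h x * (N x)^2) UNIV"
proof -
  have e: "a * grad_prod w v \<phi> x + h x * v x * \<phi> x =
      (a*(r*r')) * grad_prod w P P x + (a*(t*t')) * grad_prod w N N x + (a*(r*t' + t*r')) * grad_prod w P N x
      + (r*r') * (h x * (P x)^2) + (t*t') * (h x * (N x)^2)" for x
  proof -
    have "h x * v x * \<phi> x = r*r'*(h x*(P x)^2) + t*t'*(h x*(N x)^2) + (r*t'+t*r')*h x*(P x * N x)"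
      by (simp add: v ph algebra_simps power2_eq_square)
    moreover have z: "P x * N x = 0" using PN_basic(3)[of x] .
    ultimately have hv: "h x * v x * \<phi> x = r*r'*(h x*(P x)^2) + t*t'*(h x*(N x)^2)" by simp
    show ?thesis unfolding hv grad_lin[OF v ph, of x] by (simp add: algebra_simps)
  qed
  have "H_inner a w h v \<phi> = (a*(r*r')) * infsum (\<lambda>x. grad_prod w P P x) UNIV + (a*(t*t')) * infsum (\<lambda>x. grad_prod w N N x) UNIV
      + (a*(r*t' + t*r')) * infsum (\<lambda>x. grad_prod w P N x) UNIV
      + (r*r') * infsum (\<lambda>x. h x * (P x)^2) UNIV + (t*t') * infsum (\<lambda>x. h x * (N x)^2) UNIV"
    unfolding H_inner_def by (simp only: e infsum_lin5[OF G_sums h_sums])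
  then show ?thesis by (simp add: algebra_simps)
qed

lemma pow_lin:
  assumes r: "0 < r" and t: "0 < t" and v: "\<And>x. v x = r * P x + t * N x"
  shows "infsum (\<lambda>x. \<bar>v x\<bar> powr p) UNIV = r powr p * infsum (\<lambda>x. \<bar>P x\<bar> powr p) UNIV
     + t powr p * infsum (\<lambda>x. \<bar>N x\<bar> powr p) UNIV"
proof -
  have e: "\<bar>v x\<bar> powr p = r powr p * \<bar>P x\<bar> powr p + t powr p * \<bar>N x\<bar> powr p" for x
  proof -
    have "P x = 0 \<or> N x = 0" using PN_basic(3)[of x] by simp
    then show ?thesis
    proof
      assume P0: "P x = 0"
      have vx: "v x = t * N x" using v[of x] P0 by simp
      show ?thesis unfolding vx P0 using t by (simp add: abs_mult powr_mult)
    next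
      assume N0: "N x = 0"
      have vx: "v x = r * P x" using v[of x] N0 by simp
      show ?thesis unfolding vx N0 using r by (simp add: abs_mult powr_mult)
    qed
  qed
  show ?thesis
    by (simp only: e infsum_lin2[OF pow_sums])
qed

lemma ell_lin:
  assumes r: "0 < r" and t: "0 < t" and v: "\<And>x. v x = r * P x + t * N x"
  shows "infsum (\<lambda>x. ellf p (v x)) UNIV =
      r powr p * (infsum (\<lambda>x. ellf p (P x)) UNIV + ln (r^2) * infsum (\<lambda>x. \<bar>P x\<bar> powr p) UNIV)
    + t powr p * (infsum (\<lambda>x. ellf p (N x)) UNIV + ln (t^2) * infsum (\<lambda>x. \<bar>N x\<bar> powr p) UNIV)"
proof -
  have e: "ellf p (v x) = r powr p * ellf p (P x) + (r powr p * ln (r^2)) * \<bar>P x\<bar> powr p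
      + t powr p * ellf p (N x) + (t powr p * ln (t^2)) * \<bar>N x\<bar> powr p" for x
  proof -
    have e0: "ellf p 0 = 0" by (simp add: ellf_def)
    have "P x = 0 \<or> N x = 0" using PN_basic(3)[of x] by simp
    then show ?thesis
    proof
      assume P0: "P x = 0"
      have vx: "v x = t * N x" using v[of x] P0 by simp
      show ?thesis unfolding vx ellf_scale[OF t] P0 e0 by (simp add: algebra_simps)
    next
      assume N0: "N x = 0"
      have vx: "v x = r * P x" using v[of x] N0 by simp
      show ?thesis unfolding vx ellf_scale[OF r] N0 e0 by (simp add: algebra_simps)
    qed
  qed
  have "infsum (\<lambda>x. ellf p (v x)) UNIV = r powr p * infsum (\<lambda>x. ellf p (P x)) UNIV
      + (r powr p * ln (r^2)) * infsum (\<lambda>x. \<bar>P x\<bar> powr p) UNIV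
      + t powr p * infsum (\<lambda>x. ellf p (N x)) UNIV + (t powr p * ln (t^2)) * infsum (\<lambda>x. \<bar>N x\<bar> powr p) UNIV"
    by (simp only: e infsum_lin4[OF ell_sums(1) pow_sums(1) ell_sums(2) pow_sums(2)])
  then show ?thesis by (simp add: algebra_simps)
qed

lemma nonlin_PN:
  "nonlin p (u x) * P x = ellf p (P x)" "nonlin p (u x) * N x = ellf p (N x)"
proof -
  have c: "\<bar>u x\<bar> powr (p-2) * u x * ln ((u x)^2) * u x = \<bar>u x\<bar> powr p * ln ((u x)^2)"
    using pow_cancel2[of "u x" p] by (simp add: algebra_simps)
  have uu: "nonlin p (u x) * u x = ellf p (u x)"
  proof (cases "u x = 0")
    case True then show ?thesis by (simp add: nonlin_def ellf_def)
  next
    case False then show ?thesis unfolding nonlin_def ellf_def using c by simp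
  qed
  have e0: "ellf p 0 = 0" by (simp add: ellf_def)
  have Pc: "P x = u x \<or> P x = 0" and Nc: "N x = u x \<or> N x = 0"
    by (auto simp: pos_part_def neg_part_def max_def min_def)
  show "nonlin p (u x) * P x = ellf p (P x)" using Pc uu e0 by (elim disjE) simp_all
  show "nonlin p (u x) * N x = ellf p (N x)" using Nc uu e0 by (elim disjE) simp_all
qed

end


theorem mainTheorem13:
  fixes s a b p :: real
    and w :: "'d::finite lattice \<Rightarrow> 'd lattice \<Rightarrow> real"
    and h :: "'d lattice \<Rightarrow> real"
    and u :: "'d lattice \<Rightarrow> real"
    and r t :: real
  assumes "0 < s" "s < 1"
    and "frac_weight s w"
    and "0 < a" "0 < b"
    and "p > 6"
    and "\<exists>h0 > 0. \<forall>x. h x \<ge> h0"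
    and "u \<in> M_set a b p w h"
    and "0 < r" "0 < t" "(r, t) \<noteq> (1, 1)"
  shows "J_fun a b p w h u > J_fun a b p w h (\<lambda>x. r * pos_part u x + t * neg_part u x)"
proof -
  have a: "0 < a" and b: "0 < b" and p6: "p > 6" and r: "0 < r" and t: "0 < t" using assms by auto
  have rt: "r \<noteq> 1 \<or> t \<noteq> 1" using assms(11) by auto
  obtain h0 where h0: "0 < h0" "\<And>x. h0 \<le> h x" using assms(7) by blast
  have hnn: "\<And>x. 0 \<le> h x" using h0(1) h0(2) by (meson less_le_trans less_imp_le)
  have wpos: "\<And>x y. x \<noteq> y \<Longrightarrow> 0 < w x y" using assms(3) unfolding frac_weight_def by auto
  have uM: "u \<in> H_space w h" "pos_part u \<noteq> (\<lambda>x. 0)" "neg_part u \<noteq> (\<lambda>x. 0)"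
    "J_deriv a b p w h u (pos_part u) = 0" "J_deriv a b p w h u (neg_part u) = 0"
    using assms(8) unfolding M_set_def by auto
  have uW: "u \<in> W_space w" and hsum: "(\<lambda>x. h x * (u x)^2) summable_on UNIV"
    using uM(1) unfolding H_space_def by auto
  have inner: "\<And>x. (\<lambda>y. w x y * (u x - u y)^2) summable_on (UNIV - {x})"
    and Wsum: "W_dens w u summable_on UNIV"
    using uW unfolding W_space_def by auto
  interpret S2 w u h p
    by unfold_locales (use wpos inner Wsum hsum hnn p6 in auto)
  define X1 where "X1 = infsum (\<lambda>x. grad_prod w P P x) UNIV"
  define X2 where "X2 = infsum (\<lambda>x. grad_prod w N N x) UNIV"
  define C where "C = infsum (\<lambda>x. grad_prod w P N x) UNIV"
  define H1 where "H1 = infsum (\<lambda>x. h x * (P x)^2) UNIV"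
  define H2 where "H2 = infsum (\<lambda>x. h x * (N x)^2) UNIV"
  define P1 where "P1 = infsum (\<lambda>x. \<bar>P x\<bar> powr p) UNIV"
  define P2 where "P2 = infsum (\<lambda>x. \<bar>N x\<bar> powr p) UNIV"
  define L1 where "L1 = infsum (\<lambda>x. ellf p (P x)) UNIV"
  define L2 where "L2 = infsum (\<lambda>x. ellf p (N x)) UNIV"
  define v where "v = (\<lambda>x. r * P x + t * N x)"
  have fu: "\<And>x. u x = 1 * P x + 1 * N x" by (rule u_form)
  have fP: "\<And>x. P x = 1 * P x + 0 * N x" by simp
  have fN: "\<And>x. N x = 0 * P x + 1 * N x" by simp
  have fv: "\<And>x. v x = r * P x + t * N x" by (simp add: v_def)
  have one: "(0::real) < 1" by simp
  have ell_eq: "\<And>f. (\<Sum>\<^sub>\<infinity>x\<in>UNIV. (if f x = 0 then 0 else \<bar>f x\<bar> powr p * ln ((f x)\<^sup>2))) = infsum (\<lambda>x. ellf p (f x)) UNIV"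
    by (simp add: ellf_def)
  have Hu: "H_inner a w h u u = a * (X1 + X2 + 2*C) + H1 + H2"
    using H_lin[OF fu fu, of a] by (simp add: X1_def X2_def C_def H1_def H2_def)
  have Gu: "grad_norm2 w u = X1 + X2 + 2*C"
    using sumG_lin[OF fu fu] by (simp add: grad_norm2_def X1_def X2_def C_def)
  have Pu: "infsum (\<lambda>x. \<bar>u x\<bar> powr p) UNIV = P1 + P2"
    using pow_lin[OF one one fu] by (simp add: P1_def P2_def)
  have Lu: "infsum (\<lambda>x. ellf p (u x)) UNIV = L1 + L2"
    using ell_lin[OF one one fu] by (simp add: L1_def L2_def)
  have JU: "J_fun a b p w h u = 1/2*(a*(X1+X2+2*C) + H1 + H2) + b/4*(X1+X2+2*C)^2 + 2/p^2*(P1+P2) - 1/p*(L1+L2)"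
    unfolding J_fun_def ell_eq Hu Gu Pu Lu ..
  have Hv: "H_inner a w h v v = a*(r^2*X1 + t^2*X2 + 2*r*t*C) + r^2*H1 + t^2*H2"
    using H_lin[OF fv fv, of a] by (simp add: X1_def X2_def C_def H1_def H2_def power2_eq_square algebra_simps)
  have Gv: "grad_norm2 w v = r^2*X1 + t^2*X2 + 2*r*t*C"
    using sumG_lin[OF fv fv] by (simp add: grad_norm2_def X1_def X2_def C_def power2_eq_square algebra_simps)
  have Pv: "infsum (\<lambda>x. \<bar>v x\<bar> powr p) UNIV = r powr p * P1 + t powr p * P2"
    using pow_lin[OF r t fv] by (simp add: P1_def P2_def)
  have Lv: "infsum (\<lambda>x. ellf p (v x)) UNIV = r powr p * (L1 + ln (r^2) * P1) + t powr p * (L2 + ln (t^2) * P2)"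
    using ell_lin[OF r t fv] by (simp add: L1_def L2_def P1_def P2_def)
  have JV: "J_fun a b p w h v = 1/2*(a*(r^2*X1 + t^2*X2 + 2*r*t*C) + r^2*H1 + t^2*H2) + b/4*(r^2*X1+t^2*X2+2*r*t*C)^2
       + 2/p^2*(r powr p*P1 + t powr p*P2) - 1/p*(r powr p*(L1 + ln (r^2)*P1) + t powr p*(L2 + ln (t^2)*P2))"
    unfolding J_fun_def ell_eq Hv Gv Pv Lv ..
  have HuP: "H_inner a w h u P = a * (X1 + C) + H1"
    using H_lin[OF fu fP, of a] by (simp add: X1_def X2_def C_def H1_def H2_def)
  have GuP: "infsum (\<lambda>x. grad_prod w u P x) UNIV = X1 + C"
    using sumG_lin[OF fu fP] by (simp add: X1_def X2_def C_def)
  have NuP: "infsum (\<lambda>x. nonlin p (u x) * P x) UNIV = L1"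
    unfolding L1_def nonlin_PN ..
  have HuN: "H_inner a w h u N = a * (X2 + C) + H2"
    using H_lin[OF fu fN, of a] by (simp add: X1_def X2_def C_def H1_def H2_def)
  have GuN: "infsum (\<lambda>x. grad_prod w u N x) UNIV = X2 + C"
    using sumG_lin[OF fu fN] by (simp add: X1_def X2_def C_def)
  have NuN: "infsum (\<lambda>x. nonlin p (u x) * N x) UNIV = L2"
    unfolding L2_def nonlin_PN ..
  have N1: "a*(X1+C) + H1 + b*(X1+X2+2*C)*(X1+C) = L1"
    using uM(4) unfolding J_deriv_def HuP Gu GuP NuP by simp
  have N2: "a*(X2+C) + H2 + b*(X1+X2+2*C)*(X2+C) = L2"
    using uM(5) unfolding J_deriv_def HuN Gu GuN NuN by simp
  have X1: "0 \<le> X1" unfolding X1_def by (rule infsum_nonneg) (rule G_nonneg)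
  have X2: "0 \<le> X2" unfolding X2_def by (rule infsum_nonneg) (rule G_nonneg)
  have C: "0 \<le> C" unfolding C_def by (rule infsum_nonneg) (rule G_nonneg)
  have P1: "0 \<le> P1" unfolding P1_def by (rule infsum_nonneg) simp
  have P2: "0 \<le> P2" unfolding P2_def by (rule infsum_nonneg) simp
  obtain x1 where x1: "P x1 \<noteq> 0" using uM(2) by auto
  obtain x2 where x2: "N x2 \<noteq> 0" using uM(3) by auto
  have H1: "0 < H1"
  proof -
    have "0 < h x1 * (P x1)^2" using x1 h0(2)[of x1] h0(1) by (simp add: less_le_trans)
    also have "h x1 * (P x1)^2 \<le> H1" unfolding H1_def
      by (rule single_le_infsum[OF h_sums(1)]) (simp add: hnn)
    finally show ?thesis .
  qed
  have H2: "0 < H2"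
  proof -
    have "0 < h x2 * (N x2)^2" using x2 h0(2)[of x2] h0(1) by (simp add: less_le_trans)
    also have "h x2 * (N x2)^2 \<le> H2" unfolding H2_def
      by (rule single_le_infsum[OF h_sums(2)]) (simp add: hnn)
    finally show ?thesis .
  qed
  have A1: "0 < a*X1 + H1" using a X1 H1 by (simp add: add_nonneg_pos)
  have A2: "0 < a*X2 + H2" using a X2 H2 by (simp add: add_nonneg_pos)
  have p2: "2 < p" and p4: "4 < p" and p0: "0 < p" using p6 by auto
  have gs: "0 < (1 - r^2)/2 - (1 - r powr p)/p \<or> 0 < (1 - t^2)/2 - (1 - t powr p)/p"
    using rt g_pos[OF r _ p2] g_pos[OF t _ p2] by blast
  have "J_fun a b p w h v < J_fun a b p w h u"
    unfolding JU JV
    by (rule alg_ineq[OF a b p0 r t X1 X2 C P1 P2 A1 A2 N1 N2 g_nonneg[OF r p2] g_nonneg[OF t p2] gs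
          q_nonneg[OF r p4] q_nonneg[OF t p4] k_nonneg[OF r] k_nonneg[OF t]])
  then show ?thesis unfolding v_def .
qed

end
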